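(* Let $N_t,N_r,M$ be positive integers with $M>r:=N_t+N_r$, let ${\bf F}\in\mathbb{C}^{N_r\times M}$, ${\bf G}\in\mathbb{C}^{N_t\times M}$, ${\bf H}_d\in\mathbb{C}^{N_r\times N_t}$, and let $\boldsymbol{\Theta}\in\mathbb{C}^{M\times M}$ be unitary and symmetric ($\boldsymbol{\Theta}\boldsymbol{\Theta}^H={\bf I}_M$, $\boldsymbol{\Theta}=\boldsymbol{\Theta}^T$). Let ${\bf Z}=[{\bf F}^H\,|\,{\bf G}^T]\in\mathbb{C}^{M\times r}$ and let ${\bf U}_Z\in\mathbb{C}^{M\times k}$ have orthonormal columns forming a basis of the column space of ${\bf Z}$ ($k=\operatorname{rank}{\bf Z}\le r$). Define $\tilde{\boldsymbol{\Theta}}={\bf U}_Z^H\boldsymbol{\Theta}{\bf U}_Z^*$ and $\boldsymbol{\Theta}_{lr}={\bf U}_Z\tilde{\boldsymbol{\Theta}}{\bf U}_Z^T$. Then $\boldsymbol{\Theta}_{lr}$ is a symmetric matrix of rank at most $r$, $\tilde{\boldsymbol{\Theta}}$ is a symmetric matrix with $\tilde{\boldsymbol{\Theta}}\tilde{\boldsymbol{\Theta}}^H\preceq{\bf I}_k$, and (i) ${\bf F}\boldsymbol{\Theta}{\bf G}^H={\bf F}\boldsymbol{\Theta}_{lr}{\bf G}^H$, hence ${\bf H}_d+{\bf F}\boldsymbol{\Theta}{\bf G}^H={\bf H}_d+{\bf F}\boldsymbol{\Theta}_{lr}{\bf G}^H$; (ii) $\boldsymbol{\Theta}_{lr}\boldsymbol{\Theta}_{lr}^H\preceq{\bf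 I}_M$.
   Context: ${\bf A}^*$ is the entrywise conjugate, ${\bf A}^H$ the conjugate transpose; ${\bf X}\preceq{\bf Y}$ means ${\bf Y}-{\bf X}$ is positive semidefinite. $[{\bf A}\,|\,{\bf B}]$ denotes horizontal concatenation. *)

theory Defs
  imports "Jordan_Normal_Form.Matrix" "Jordan_Normal_Form.DL_Rank"
begin

definition cconj :: "complex mat \<Rightarrow> complex mat" where
  "cconj A = map_mat cnj A"

definition adj :: "complex mat \<Rightarrow> complex mat" where
  "adj A = transpose_mat (cconj A)"

definition psd :: "complex mat \<Rightarrow> bool" where
  "psd A \<longleftrightarrow> A \<in> carrier_mat (dim_row A) (dim_row A) \<and>
     (\<forall>x \<in> carrier_vec (dim_row A).
        Im (map_vec cnj x \<bullet> (A *\<^sub>v x)) = 0 \<and> Re (map_vec cnj x \<bullet> (A *\<^sub>v x)) \<ge> 0)"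

definition loewner_le :: "complex mat \<Rightarrow> complex mat \<Rightarrow> bool" where
  "loewner_le X Y \<longleftrightarrow> dim_row X = dim_row Y \<and> dim_col X = dim_col Y \<and> psd (Y - X)"

definition hcat :: "complex mat \<Rightarrow> complex mat \<Rightarrow> complex mat" where
  "hcat A B = mat_of_cols (dim_row A) (cols A @ cols B)"

definition colspace :: "complex mat \<Rightarrow> complex vec set" where
  "colspace A = {A *\<^sub>v x | x. x \<in> carrier_vec (dim_col A)}"

definition crank :: "complex mat \<Rightarrow> nat" where
  "crank A = vec_space.rank (dim_row A) A"

end

theory Submission
  imports Defs
begin


lemma cconj_carrier[simp]: "A \<in> carrier_mat n m \<Longrightarrow> cconj A \<in> carrier_mat n m"
  and dim_cconj[simp]: "dim_row (cconj A) = dim_row A" "dim_col (cconj A) = dim_col A"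
  by (auto simp: cconj_def)

lemma adj_carrier[simp]: "A \<in> carrier_mat n m \<Longrightarrow> adj A \<in> carrier_mat m n"
  and dim_adj[simp]: "dim_row (adj A) = dim_col A" "dim_col (adj A) = dim_row A"
  by (auto simp: adj_def cconj_def)

lemma index_cconj[simp]: "i < dim_row A \<Longrightarrow> j < dim_col A \<Longrightarrow> cconj A $$ (i,j) = cnj (A $$ (i,j))"
  by (simp add: cconj_def)

lemma index_adj[simp]: "i < dim_col A \<Longrightarrow> j < dim_row A \<Longrightarrow> adj A $$ (i,j) = cnj (A $$ (j,i))"
  by (simp add: adj_def cconj_def)

lemma cconj_cconj[simp]: "cconj (cconj A) = A"
  by (intro eq_matI) auto
lemma adj_adj[simp]: "adj (adj A) = A"
  by (intro eq_matI) auto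
lemma adj_cconj[simp]: "adj (cconj A) = transpose_mat A"
  by (intro eq_matI) auto
lemma cconj_adj[simp]: "cconj (adj A) = transpose_mat A"
  by (intro eq_matI) auto
lemma transpose_cconj[simp]: "transpose_mat (cconj A) = adj A"
  by (intro eq_matI) auto
lemma transpose_adj[simp]: "transpose_mat (adj A) = cconj A"
  by (intro eq_matI) auto
lemma adj_transpose[simp]: "adj (transpose_mat A) = cconj A"
  by (intro eq_matI) auto
lemma cconj_one[simp]: "cconj (1\<^sub>m n) = 1\<^sub>m n"
  by (intro eq_matI) auto


lemma cconj_mult: "A \<in> carrier_mat n m \<Longrightarrow> B \<in> carrier_mat m p \<Longrightarrow> cconj (A * B) = cconj A * cconj B"
  by (intro eq_matI) (auto simp: scalar_prod_def cnj_sum)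

lemma adj_mult: "A \<in> carrier_mat n m \<Longrightarrow> B \<in> carrier_mat m p \<Longrightarrow> adj (A * B) = adj B * adj A"
  unfolding adj_def by (simp add: cconj_mult transpose_mult[of _ n m _ p])

definition cv :: "complex vec \<Rightarrow> complex vec" where "cv x = map_vec cnj x"

lemma cv_carrier[simp]: "x \<in> carrier_vec n \<Longrightarrow> cv x \<in> carrier_vec n" and dim_cv[simp]: "dim_vec (cv x) = dim_vec x"
  by (auto simp: cv_def)

lemma cv_minus: "x \<in> carrier_vec n \<Longrightarrow> y \<in> carrier_vec n \<Longrightarrow> cv (x - y) = cv x - cv y"
  by (intro eq_vecI) (auto simp: cv_def)

lemma cv_mult: "A \<in> carrier_mat n m \<Longrightarrow> x \<in> carrier_vec m \<Longrightarrow> cv (A *\<^sub>v x) = cconj A *\<^sub>v cv x"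
  by (intro eq_vecI) (auto simp: cv_def scalar_prod_def cnj_sum cconj_def)

lemma adj_lemma:
  assumes "A \<in> carrier_mat n m" "x \<in> carrier_vec n" "y \<in> carrier_vec m"
  shows "cv x \<bullet> (A *\<^sub>v y) = cv (adj A *\<^sub>v x) \<bullet> y"
proof -
  have "cv (adj A *\<^sub>v x) = transpose_mat A *\<^sub>v cv x"
    using cv_mult[OF adj_carrier[OF assms(1)] assms(2)] by (simp only: cconj_adj)
  then show ?thesis
    using transpose_vec_mult_scalar[OF assms(1) assms(3) cv_carrier[OF assms(2)]] by simp
qed

definition nsq :: "complex vec \<Rightarrow> complex" where "nsq x = cv x \<bullet> x"

lemma nsq_real: "nsq x = of_real (\<Sum>i<dim_vec x. (cmod (x $ i))\<^sup>2)"
proof -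
  have "nsq x = (\<Sum>i<dim_vec x. x $ i * cnj (x $ i))"
    unfolding nsq_def scalar_prod_def cv_def by (simp add: lessThan_atLeast0 mult.commute)
  also have "\<dots> = (\<Sum>i<dim_vec x. of_real ((cmod (x $ i))\<^sup>2))"
    by (rule sum.cong, rule refl, rule complex_norm_square[symmetric])
  finally show ?thesis by simp
qed

lemma nsq_Im: "Im (nsq x) = 0" and nsq_Re: "Re (nsq x) \<ge> 0"
  unfolding nsq_real by (simp_all only: Im_complex_of_real Re_complex_of_real) (simp add: sum_nonneg)



lemma cv_zero[simp]: "cv (0\<^sub>v m) = 0\<^sub>v m"
  by (intro eq_vecI) (auto simp: cv_def)

lemma isometry:
  assumes A: "A \<in> carrier_mat n m" and I: "adj A * A = 1\<^sub>m m" and x: "x \<in> carrier_vec m"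
  shows "nsq (A *\<^sub>v x) = nsq x"
proof -
  have Ax: "A *\<^sub>v x \<in> carrier_vec n" using A x by simp
  have "nsq (A *\<^sub>v x) = cv (adj A *\<^sub>v (A *\<^sub>v x)) \<bullet> x"
    unfolding nsq_def by (rule adj_lemma[OF A Ax x])
  also have "adj A *\<^sub>v (A *\<^sub>v x) = (adj A * A) *\<^sub>v x"
    using A x adj_carrier[OF A] by (simp add: assoc_mult_mat_vec[of _ m n _ m])
  also have "\<dots> = x" using I x by simp
  finally show ?thesis by (simp add: nsq_def)
qed

lemma bessel:
  assumes B: "B \<in> carrier_mat n m" and I: "adj B * B = 1\<^sub>m m" and w: "w \<in> carrier_vec n"
  shows "Re (nsq (adj B *\<^sub>v w)) \<le> Re (nsq w)"
proof -
  define z where "z = adj B *\<^sub>v w"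
  define p where "p = B *\<^sub>v z"
  define r where "r = w - p"
  have aB: "adj B \<in> carrier_mat m n" using B by simp
  have z: "z \<in> carrier_vec m" unfolding z_def using aB w by simp
  have p: "p \<in> carrier_vec n" unfolding p_def using B z by simp
  have r: "r \<in> carrier_vec n" unfolding r_def using p w by simp
  have "adj B *\<^sub>v r = adj B *\<^sub>v w - adj B *\<^sub>v p"
    unfolding r_def using aB w p by (simp add: mult_minus_distrib_mat_vec)
  also have "adj B *\<^sub>v p = (adj B * B) *\<^sub>v z" unfolding p_def using B aB z
    by (simp add: assoc_mult_mat_vec[of _ m n _ m])
  also have "\<dots> = z" using I z by simp
  finally have r0: "adj B *\<^sub>v r = 0\<^sub>v m" unfolding z_def using aB w by simp
  have "nsq r = cv r \<bullet> w - cv r \<bullet> p"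
    unfolding nsq_def r_def using w p by (simp add: scalar_prod_minus_distrib[of _ n])
  also have "cv r \<bullet> p = cv (adj B *\<^sub>v r) \<bullet> z"
    unfolding p_def by (rule adj_lemma[OF B r z])
  also have "\<dots> = 0" unfolding r0 using z by simp
  also have "cv r \<bullet> w = cv w \<bullet> w - cv p \<bullet> w"
    unfolding r_def using w p by (simp add: cv_minus minus_scalar_prod_distrib[of _ n])
  also have "cv p \<bullet> w = cv z \<bullet> (adj B *\<^sub>v w)"
  proof -
    have "cv z \<bullet> (adj B *\<^sub>v w) = cv (adj (adj B) *\<^sub>v z) \<bullet> w"
      by (rule adj_lemma[OF adj_carrier[OF B] z w])
    then show ?thesis unfolding p_def by simp
  qed
  finally have "nsq r = nsq w - nsq z" unfolding nsq_def z_def by simp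
  then have "Re (nsq w) - Re (nsq z) = Re (nsq r)" by simp
  then show ?thesis using nsq_Re[of r] unfolding z_def by linarith
qed

lemma loewnerI:
  assumes A: "A \<in> carrier_mat n m"
    and c: "\<And>x. x \<in> carrier_vec n \<Longrightarrow> Re (nsq (adj A *\<^sub>v x)) \<le> Re (nsq x)"
  shows "loewner_le (A * adj A) (1\<^sub>m n)"
proof -
  have AA: "A * adj A \<in> carrier_mat n n" using A by simp
  { fix x :: "complex vec" assume x: "x \<in> carrier_vec n"
    have aA: "adj A \<in> carrier_mat m n" using A by simp
    have Ax: "adj A *\<^sub>v x \<in> carrier_vec m" using aA x by simp
    have "(1\<^sub>m n - A * adj A) *\<^sub>v x = x - A *\<^sub>v (adj A *\<^sub>v x)"
      using A aA x by (simp add: minus_mult_distrib_mat_vec[of _ n n _ x] assoc_mult_mat_vec[of _ n m _ n])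
    then have "cv x \<bullet> ((1\<^sub>m n - A * adj A) *\<^sub>v x) = cv x \<bullet> x - cv x \<bullet> (A *\<^sub>v (adj A *\<^sub>v x))"
      using scalar_prod_minus_distrib[OF cv_carrier[OF x] x mult_mat_vec_carrier[OF A Ax]] by simp
    also have "cv x \<bullet> (A *\<^sub>v (adj A *\<^sub>v x)) = nsq (adj A *\<^sub>v x)"
      unfolding nsq_def using adj_lemma[OF A x Ax] .
    finally have e: "cv x \<bullet> ((1\<^sub>m n - A * adj A) *\<^sub>v x) = nsq x - nsq (adj A *\<^sub>v x)"
      by (simp add: nsq_def)
    have "Im (cv x \<bullet> ((1\<^sub>m n - A * adj A) *\<^sub>v x)) = 0"
      "Re (cv x \<bullet> ((1\<^sub>m n - A * adj A) *\<^sub>v x)) \<ge> 0"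
      unfolding e using nsq_Im[of x] nsq_Im[of "adj A *\<^sub>v x"] c[OF x] by simp_all
  }
  then show ?thesis unfolding loewner_le_def psd_def cv_def using AA by auto
qed



lemma (in vec_space) mult_in_span:
  assumes A: "A \<in> carrier_mat n m" and v: "v \<in> carrier_vec m"
  shows "A *\<^sub>v v \<in> span (set (cols A))"
proof -
  have cA: "set (cols A) \<subseteq> carrier_vec n" using cols_dim[of A] carrier_matD(1)[OF A] by simp
  have cd: "\<forall>w \<in> set (cols A). dim_vec w = n" using cA carrier_vecD by blast
  have "lincomb_list (\<lambda>i. v $ i) (cols A) = mat_of_cols n (cols A) *\<^sub>v vec (length (cols A)) (\<lambda>i. v $ i)"
    by (rule lincomb_list_as_mat_mult[OF cd])
  also have "\<dots> = A *\<^sub>v v"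
  proof -
    have "mat_of_cols n (cols A) = A" using mat_of_cols_cols[of A] carrier_matD(1)[OF A] by simp
    moreover have "vec (length (cols A)) (\<lambda>i. v $ i) = v" using A v by (intro eq_vecI) auto
    ultimately show ?thesis by simp
  qed
  finally have "A *\<^sub>v v \<in> span_list (cols A)" unfolding span_list_def by (intro CollectI exI[of _ "($) v"]) simp
  then show ?thesis using span_list_as_span[OF cA] by simp
qed


lemma (in vec_space) rank_mult_le:
  assumes A: "A \<in> carrier_mat n m" and B: "B \<in> carrier_mat m p"
  shows "rank (A * B) \<le> m"
proof -
  have AB: "A * B \<in> carrier_mat n p" using A B by simp
  have cA: "set (cols A) \<subseteq> carrier_vec n" using cols_dim[of A] carrier_matD(1)[OF A] by simp
  have cAB: "set (cols (A * B)) \<subseteq> carrier_vec n" using cols_dim[of "A * B"] carrier_matD(1)[OF AB] by simp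
  have "set (cols (A * B)) \<subseteq> span (set (cols A))"
  proof
    fix x assume "x \<in> set (cols (A * B))"
    then obtain j where j: "j < p" "x = col (A * B) j" using AB by (auto simp: in_set_conv_nth)
    then have "x = A *\<^sub>v col B j" by (simp only: j(2) col_mult2[OF A B j(1)])
    moreover have "col B j \<in> carrier_vec m" using B j by simp
    ultimately show "x \<in> span (set (cols A))" using mult_in_span[OF A] by simp
  qed
  then have sub: "span (set (cols (A * B))) \<subseteq> span (set (cols A))"
    by (rule span_subsetI[OF cA])
  have sW: "subspace class_ring (span (set (cols A))) V" using span_is_subspace[OF cA] .
  have sX: "subspace class_ring (span (set (cols (A * B)))) V" using span_is_subspace[OF cAB] .
  have ss: "subspace class_ring (span (set (cols (A * B)))) (vs (span (set (cols A))))"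
    using nested_subspaces[OF sW sX sub] .
  have f1: "vectorspace.fin_dim class_ring (vs (span (set (cols A))))" using fin_dim_span_cols[OF A] .
  have f2: "vectorspace.fin_dim class_ring (vs (span (set (cols (A * B)))))" using fin_dim_span_cols[OF AB] .
  have "rank (A * B) \<le> rank A"
    unfolding rank_def using vectorspace.subspace_dim[OF subspace_is_vs[OF sW] ss f1] f2 by auto
  also have "\<dots> \<le> m" using rank_le_nc[OF A] .
  finally show ?thesis .
qed



lemma mult_unit_vec:
  fixes A :: "complex mat"
  assumes "A \<in> carrier_mat nr nc" "j < nc"
  shows "A *\<^sub>v unit_vec nc j = col A j"
proof -
  have e: "\<And>x::complex. \<And>P. x * (if P then 1 else 0) = (if P then x else 0)" by simp
  show ?thesis using assms by (intro eq_vecI) (auto simp: scalar_prod_def unit_vec_def e sum.delta' cong: if_cong)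
qed

lemma cconj_transpose[simp]: "cconj (transpose_mat A) = adj A"
  by (intro eq_matI) auto

lemma proj_id:
  assumes U: "U \<in> carrier_mat M k" and I: "adj U * U = 1\<^sub>m k" and A: "A \<in> carrier_mat M n"
    and c: "\<And>j. j < n \<Longrightarrow> col A j \<in> colspace U"
  shows "U * (adj U * A) = A"
proof (rule mat_col_eqI)
  fix j assume "j < dim_col A"
  then have j: "j < n" using A by simp
  obtain y where y: "y \<in> carrier_vec k" "col A j = U *\<^sub>v y"
    using c[OF j] U unfolding colspace_def by auto
  have aU: "adj U \<in> carrier_mat k M" using U by simp
  have "col (U * (adj U * A)) j = U *\<^sub>v (adj U *\<^sub>v col A j)"
    using col_mult2[OF U mult_carrier_mat[OF aU A] j] col_mult2[OF aU A j] by simp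
  also have "adj U *\<^sub>v col A j = (adj U * U) *\<^sub>v y"
    using y U aU by (simp add: assoc_mult_mat_vec[of _ k M _ k])
  also have "\<dots> = y" using I y by simp
  finally show "col (U * (adj U * A)) j = col A j" using y by simp
qed (use U A in auto)


lemma assoc7:
  fixes A B C D E H K :: "complex mat"
  assumes "A \<in> carrier_mat n0 n1" "B \<in> carrier_mat n1 n2" "C \<in> carrier_mat n2 n3"
    "D \<in> carrier_mat n3 n4" "E \<in> carrier_mat n4 n5" "H \<in> carrier_mat n5 n6" "K \<in> carrier_mat n6 n7"
  shows "A * (B * (C * D * E) * H) * K = (A * B * C) * D * (E * (H * K))"
proof -
  note m = mult_carrier_mat
  note a = assoc_mult_mat
  from assms have A: "A \<in> carrier_mat n0 n1" and B: "B \<in> carrier_mat n1 n2" and C: "C \<in> carrier_mat n2 n3"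
    and D: "D \<in> carrier_mat n3 n4" and E: "E \<in> carrier_mat n4 n5" and H: "H \<in> carrier_mat n5 n6"
    and K: "K \<in> carrier_mat n6 n7" by auto
  have DE: "D * E \<in> carrier_mat n3 n5" using m[OF D E] .
  have CDE: "C * (D * E) \<in> carrier_mat n2 n5" using m[OF C DE] .
  have EH: "E * H \<in> carrier_mat n4 n6" using m[OF E H] .
  have DEH: "D * (E * H) \<in> carrier_mat n3 n6" using m[OF D EH] .
  have CDEH: "C * (D * (E * H)) \<in> carrier_mat n2 n6" using m[OF C DEH] .
  have W: "B * (C * (D * (E * H))) \<in> carrier_mat n1 n6" using m[OF B CDEH] .
  have HK: "H * K \<in> carrier_mat n5 n7" using m[OF H K] .
  have R: "E * (H * K) \<in> carrier_mat n4 n7" using m[OF E HK] .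
  have DR: "D * (E * (H * K)) \<in> carrier_mat n3 n7" using m[OF D R] .
  have CDR: "C * (D * (E * (H * K))) \<in> carrier_mat n2 n7" using m[OF C DR] .
  have AB: "A * B \<in> carrier_mat n0 n2" using m[OF A B] .
  have ABC: "A * B * C \<in> carrier_mat n0 n3" using m[OF AB C] .
  have "B * (C * D * E) * H = B * (C * (D * (E * H)))"
    by (simp only: a[OF C D E] a[OF B CDE H] a[OF C DE H] a[OF D E H])
  then have "A * (B * (C * D * E) * H) * K = A * (B * (C * (D * (E * (H * K)))))"
    by (simp only: a[OF A W K] a[OF B CDEH K] a[OF C DEH K] a[OF D EH K] a[OF E H K])
  also have "\<dots> = (A * B * C) * D * (E * (H * K))"
    by (simp only: a[OF ABC D R] a[OF AB C DR] a[OF A B CDR])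
  finally show ?thesis .
qed




theorem theorem2:
  fixes Nt Nr M k :: nat
    and F G Hd \<Theta> Z U \<Theta>t \<Theta>lr :: "complex mat"
  assumes "Nt > 0" and "Nr > 0" and "M > Nt + Nr"
    and "F \<in> carrier_mat Nr M" and "G \<in> carrier_mat Nt M"
    and "Hd \<in> carrier_mat Nr Nt" and "\<Theta> \<in> carrier_mat M M"
    and "\<Theta> * adj \<Theta> = 1\<^sub>m M" and "\<Theta> = transpose_mat \<Theta>"
    and "Z = hcat (adj F) (transpose_mat G)"
    and "k = crank Z"
    and "U \<in> carrier_mat M k" and "adj U * U = 1\<^sub>m k"
    and "colspace U = colspace Z"
    and "\<Theta>t = adj U * \<Theta> * cconj U"
    and "\<Theta>lr = U * \<Theta>t * transpose_mat U"
  shows "transpose_mat \<Theta>lr = \<Theta>lr \<and> crank \<Theta>lr \<le> Nt + Nr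
    \<and> transpose_mat \<Theta>t = \<Theta>t \<and> loewner_le (\<Theta>t * adj \<Theta>t) (1\<^sub>m k)
    \<and> F * \<Theta> * adj G = F * \<Theta>lr * adj G
    \<and> Hd + F * \<Theta> * adj G = Hd + F * \<Theta>lr * adj G
    \<and> loewner_le (\<Theta>lr * adj \<Theta>lr) (1\<^sub>m M)"
proof -
  note F = assms(4) and G = assms(5) and Th = assms(7) and ThU = assms(8) and ThS = assms(9)
    and Zd = assms(10) and kd = assms(11) and U = assms(12) and UU = assms(13) and cs = assms(14)
    and Ttd = assms(15) and Tlrd = assms(16)
  have aF: "adj F \<in> carrier_mat M Nr" using F by simp
  have aG: "adj G \<in> carrier_mat M Nt" using G by simp
  have tG: "transpose_mat G \<in> carrier_mat M Nt" using G by simp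
  have aU: "adj U \<in> carrier_mat k M" using U by simp
  have cU: "cconj U \<in> carrier_mat M k" using U by simp
  have tU: "transpose_mat U \<in> carrier_mat k M" using U by simp
  have aTh: "adj \<Theta> \<in> carrier_mat M M" using Th by simp
  have Tt: "\<Theta>t \<in> carrier_mat k k" unfolding Ttd using aU Th cU by simp
  have UTt: "U * \<Theta>t \<in> carrier_mat M k" using U Tt by simp
  have Tlr: "\<Theta>lr \<in> carrier_mat M M" unfolding Tlrd using UTt tU by simp
  define vs where "vs = cols (adj F) @ cols (transpose_mat G)"
  have Zeq: "Z = mat_of_cols M vs" unfolding Zd hcat_def vs_def
    by (simp only: carrier_matD(1)[OF aF])
  have lvs: "length vs = Nr + Nt" unfolding vs_def
    by (simp only: length_append cols_length carrier_matD(2)[OF aF] carrier_matD(2)[OF tG])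
  have Zc: "Z \<in> carrier_mat M (Nr + Nt)" using mat_of_cols_carrier(1)[of M vs] lvs Zeq by simp
  have colZ1: "col Z j = col (adj F) j" if "j < Nr" for j
  proof -
    have "vs ! j = col (adj F) j" unfolding vs_def using that aF F by (simp add: nth_append)
    moreover have "col (adj F) j \<in> carrier_vec M" using that aF by simp
    ultimately show ?thesis unfolding Zeq using col_mat_of_cols[of j vs M] that lvs by simp
  qed
  have colZ2: "col Z (Nr + j) = col (transpose_mat G) j" if "j < Nt" for j
  proof -
    have "vs ! (Nr + j) = col (transpose_mat G) j" unfolding vs_def using that aF tG F G by (simp add: nth_append)
    moreover have "col (transpose_mat G) j \<in> carrier_vec M" using that tG by simp
    ultimately show ?thesis unfolding Zeq using col_mat_of_cols[of "Nr + j" vs M] that lvs by simp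
  qed
  have inZ: "col Z j \<in> colspace U" if "j < Nr + Nt" for j
  proof -
    have "col Z j = Z *\<^sub>v unit_vec (Nr + Nt) j" using mult_unit_vec[OF Zc that] by simp
    then have "col Z j \<in> colspace Z" unfolding colspace_def using Zc by auto
    then show ?thesis using cs by simp
  qed
  have PF: "U * (adj U * adj F) = adj F"
  proof (rule proj_id[OF U UU aF])
    fix j assume j: "j < Nr"
    then have "j < Nr + Nt" by simp
    then show "col (adj F) j \<in> colspace U" using inZ colZ1[OF j] by metis
  qed
  have PG: "U * (adj U * transpose_mat G) = transpose_mat G"
  proof (rule proj_id[OF U UU tG])
    fix j assume j: "j < Nt"
    then have "Nr + j < Nr + Nt" by simp
    then show "col (transpose_mat G) j \<in> colspace U" using inZ colZ2[OF j] by metis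
  qed
  have kle: "k \<le> Nr + Nt" unfolding kd crank_def using vec_space.rank_le_nc[OF Zc] Zc by simp
  have sTt: "transpose_mat \<Theta>t = \<Theta>t"
  proof -
    have "transpose_mat \<Theta>t = transpose_mat (cconj U) * transpose_mat (adj U * \<Theta>)"
      unfolding Ttd using transpose_mult[OF mult_carrier_mat[OF aU Th] cU] .
    also have "transpose_mat (adj U * \<Theta>) = transpose_mat \<Theta> * transpose_mat (adj U)"
      using transpose_mult[OF aU Th] .
    finally have "transpose_mat \<Theta>t = adj U * (\<Theta> * cconj U)" using ThS by simp
    then show ?thesis unfolding Ttd using aU Th cU by simp
  qed
  have sTlr: "transpose_mat \<Theta>lr = \<Theta>lr"
  proof -
    have "transpose_mat \<Theta>lr = transpose_mat (transpose_mat U) * transpose_mat (U * \<Theta>t)"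
      unfolding Tlrd using transpose_mult[OF UTt tU] .
    also have "transpose_mat (U * \<Theta>t) = transpose_mat \<Theta>t * transpose_mat U"
      using transpose_mult[OF U Tt] .
    finally have "transpose_mat \<Theta>lr = U * (\<Theta>t * transpose_mat U)" using sTt by simp
    then show ?thesis unfolding Tlrd using U Tt tU by simp
  qed
  have rk: "crank \<Theta>lr \<le> Nt + Nr"
  proof -
    have "\<Theta>lr = U * (\<Theta>t * transpose_mat U)" unfolding Tlrd using U Tt tU by simp
    then have "vec_space.rank M \<Theta>lr \<le> k"
      using vec_space.rank_mult_le[OF U mult_carrier_mat[OF Tt tU]] by simp
    then show ?thesis unfolding crank_def using Tlr kle by simp
  qed
  have iso_U: "nsq (U *\<^sub>v x) = nsq x" if "x \<in> carrier_vec k" for x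
    using isometry[OF U UU that] .
  have iso_Th: "nsq (adj \<Theta> *\<^sub>v x) = nsq x" if "x \<in> carrier_vec M" for x
    using isometry[OF aTh _ that] ThU by simp
  have cUU: "adj (cconj U) * cconj U = 1\<^sub>m k"
  proof -
    have "cconj (adj U * U) = cconj (adj U) * cconj U" using cconj_mult[OF aU U] .
    then show ?thesis using UU by simp
  qed
  have iso_cU: "nsq (cconj U *\<^sub>v x) = nsq x" if "x \<in> carrier_vec k" for x
    using isometry[OF cU cUU that] .
  have bes_U: "Re (nsq (adj U *\<^sub>v x)) \<le> Re (nsq x)" if "x \<in> carrier_vec M" for x
    using bessel[OF U UU that] .
  have bes_tU: "Re (nsq (transpose_mat U *\<^sub>v x)) \<le> Re (nsq x)" if "x \<in> carrier_vec M" for x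
    using bessel[OF cU cUU that] by simp
  have adjTt: "adj \<Theta>t = transpose_mat U * (adj \<Theta> * U)"
  proof -
    have "adj \<Theta>t = adj (cconj U) * adj (adj U * \<Theta>)"
      unfolding Ttd using adj_mult[OF mult_carrier_mat[OF aU Th] cU] .
    also have "adj (adj U * \<Theta>) = adj \<Theta> * adj (adj U)" using adj_mult[OF aU Th] .
    finally show ?thesis by simp
  qed
  have conTt: "Re (nsq (adj \<Theta>t *\<^sub>v x)) \<le> Re (nsq x)" if x: "x \<in> carrier_vec k" for x
  proof -
    have Ux: "U *\<^sub>v x \<in> carrier_vec M" using U x by simp
    have TUx: "adj \<Theta> *\<^sub>v (U *\<^sub>v x) \<in> carrier_vec M" using aTh Ux by simp
    have "adj \<Theta>t *\<^sub>v x = transpose_mat U *\<^sub>v (adj \<Theta> *\<^sub>v (U *\<^sub>v x))"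
      unfolding adjTt using tU aTh U x by (simp add: assoc_mult_mat_vec[of _ k M _ k] assoc_mult_mat_vec[of _ M M _ k])
    then have "Re (nsq (adj \<Theta>t *\<^sub>v x)) \<le> Re (nsq (adj \<Theta> *\<^sub>v (U *\<^sub>v x)))"
      using bes_tU[OF TUx] by simp
    also have "\<dots> = Re (nsq x)" using iso_Th[OF Ux] iso_U[OF x] by simp
    finally show ?thesis .
  qed
  have LTt: "loewner_le (\<Theta>t * adj \<Theta>t) (1\<^sub>m k)"
    by (rule loewnerI[OF Tt conTt])
  have adjTlr: "adj \<Theta>lr = cconj U * (adj \<Theta>t * adj U)"
  proof -
    have "adj \<Theta>lr = adj (transpose_mat U) * adj (U * \<Theta>t)"
      unfolding Tlrd using adj_mult[OF UTt tU] .
    also have "adj (U * \<Theta>t) = adj \<Theta>t * adj U" using adj_mult[OF U Tt] .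
    finally show ?thesis by simp
  qed
  have aTt: "adj \<Theta>t \<in> carrier_mat k k" using Tt by simp
  have conTlr: "Re (nsq (adj \<Theta>lr *\<^sub>v x)) \<le> Re (nsq x)" if x: "x \<in> carrier_vec M" for x
  proof -
    have Ux: "adj U *\<^sub>v x \<in> carrier_vec k" using aU x by simp
    have TUx: "adj \<Theta>t *\<^sub>v (adj U *\<^sub>v x) \<in> carrier_vec k" using aTt Ux by simp
    have "adj \<Theta>lr *\<^sub>v x = cconj U *\<^sub>v (adj \<Theta>t *\<^sub>v (adj U *\<^sub>v x))"
      unfolding adjTlr using cU aTt aU x by (simp add: assoc_mult_mat_vec[of _ M k _ M] assoc_mult_mat_vec[of _ k k _ M])
    then have "nsq (adj \<Theta>lr *\<^sub>v x) = nsq (adj \<Theta>t *\<^sub>v (adj U *\<^sub>v x))"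
      using iso_cU[OF TUx] by simp
    then have "Re (nsq (adj \<Theta>lr *\<^sub>v x)) \<le> Re (nsq (adj U *\<^sub>v x))"
      using conTt[OF Ux] by simp
    also have "\<dots> \<le> Re (nsq x)" using bes_U[OF x] .
    finally show ?thesis .
  qed
  have LTlr: "loewner_le (\<Theta>lr * adj \<Theta>lr) (1\<^sub>m M)"
    by (rule loewnerI[OF Tlr conTlr])
  have FP: "F * U * adj U = F"
  proof -
    have "F = adj (U * (adj U * adj F))" using PF by simp
    also have "\<dots> = adj (adj U * adj F) * adj U" using adj_mult[OF U mult_carrier_mat[OF aU aF]] .
    also have "adj (adj U * adj F) = F * U" using adj_mult[OF aU aF] by simp
    finally show ?thesis by simp
  qed
  have GP: "cconj U * (transpose_mat U * adj G) = adj G"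
  proof -
    have "adj G = cconj (U * (adj U * transpose_mat G))" using PG by simp
    also have "\<dots> = cconj U * cconj (adj U * transpose_mat G)" using cconj_mult[OF U mult_carrier_mat[OF aU tG]] .
    also have "cconj (adj U * transpose_mat G) = transpose_mat U * adj G" using cconj_mult[OF aU tG] by simp
    finally show ?thesis by simp
  qed
  have FU: "F * U \<in> carrier_mat Nr k" using F U by simp
  have main: "F * \<Theta>lr * adj G = F * \<Theta> * adj G"
  proof -
    have "F * \<Theta>lr * adj G = (F * U * adj U) * \<Theta> * (cconj U * (transpose_mat U * adj G))"
      unfolding Tlrd Ttd by (rule assoc7[OF F U aU Th cU tU aG])
    then show ?thesis unfolding FP GP .
  qed
  show ?thesis using sTlr rk sTt LTt main LTlr by simp
qed


end
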